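(* Let $D,K,N\in\mathbb{N}$ and let $\{d_n\}_{n\in\mathbb{N}}$ be a sequence of natural numbers. Writing $D_n=\prod_{i=1}^{n}d_i$, we have $$D^{N+1}\prod_{i=1}^{N}(KD_i+d_i)\geq KDD_N\sum_{n=1}^{N}D^n\prod_{i=1}^{n-1}(KD_i+d_i).$$
   Context: $\mathbb{N}=\{1,2,3,\ldots\}$; empty products equal $1$. *)

theory Defs
  imports Main
begin

end

theory Submission
  imports Defs
begin

lemma aux:
  fixes D K :: nat and d :: "nat \<Rightarrow> nat"
  assumes D: "D \<ge> 1"
  shows "D ^ N * (\<Prod>i=1..N. K * (\<Prod>j=1..i. d j) + d i)
         \<ge> K * (\<Prod>j=1..N. d j) *
           (\<Sum>n=1..N. D ^ n * (\<Prod>i=1..n-1. K * (\<Prod>j=1..i. d j) + d i))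
           + D ^ N * (\<Prod>j=1..N. d j)"
proof (induction N)
  case 0
  then show ?case by simp
next
  case (Suc N)
  define P where "P = (\<Prod>i=1..N. K * (\<Prod>j=1..i. d j) + d i)"
  define Dn where "Dn = (\<Prod>j=1..N. d j)"
  define S where "S = (\<Sum>n=1..N. D ^ n * (\<Prod>i=1..n-1. K * (\<Prod>j=1..i. d j) + d i))"
  define e where "e = d (Suc N)"
  have IH: "D ^ N * P \<ge> K * Dn * S + D ^ N * Dn" using Suc unfolding P_def Dn_def S_def by simp
  have P1: "(\<Prod>i=1..Suc N. K * (\<Prod>j=1..i. d j) + d i) = P * (K * Dn * e + e)"
    unfolding P_def Dn_def e_def by (simp add: prod.cl_ivl_Suc)
  have D1: "(\<Prod>j=1..Suc N. d j) = Dn * e" unfolding Dn_def e_def by (simp add: prod.cl_ivl_Suc)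
  have S1: "(\<Sum>n=1..Suc N. D ^ n * (\<Prod>i=1..n-1. K * (\<Prod>j=1..i. d j) + d i)) = S + D ^ Suc N * P"
    unfolding S_def P_def by (simp add: sum.cl_ivl_Suc)
  have A: "D * (D ^ N * P) \<ge> D * (K * Dn * S + D ^ N * Dn)" using IH by simp
  have B: "D * (K * Dn * S) \<ge> K * Dn * S" using D by simp
  have C: "D * (D ^ N * P) \<ge> K * Dn * S + D ^ Suc N * Dn"
  proof -
    have "D * (K * Dn * S + D ^ N * Dn) = D * (K * Dn * S) + D ^ Suc N * Dn"
      by (simp add: algebra_simps)
    then show ?thesis using A B by linarith
  qed
  have E: "e * (D * (D ^ N * P)) \<ge> e * (K * Dn * S + D ^ Suc N * Dn)"
    using C by (rule mult_le_mono2)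
  show ?case unfolding P1 D1 S1
    using E by (simp add: algebra_simps)
qed

theorem lemma2p5:
  fixes D K N :: nat and d :: "nat \<Rightarrow> nat"
  assumes "D \<ge> 1" and "K \<ge> 1" and "N \<ge> 1"
    and "\<And>n. n \<ge> 1 \<Longrightarrow> d n \<ge> 1"
  shows "D ^ (N + 1) * (\<Prod>i=1..N. K * (\<Prod>j=1..i. d j) + d i)
         \<ge> K * D * (\<Prod>j=1..N. d j) *
           (\<Sum>n=1..N. D ^ n * (\<Prod>i=1..n-1. K * (\<Prod>j=1..i. d j) + d i))"
proof -
  have "D * (K * (\<Prod>j=1..N. d j) *
           (\<Sum>n=1..N. D ^ n * (\<Prod>i=1..n-1. K * (\<Prod>j=1..i. d j) + d i)))
       \<le> D * (D ^ N * (\<Prod>i=1..N. K * (\<Prod>j=1..i. d j) + d i))"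
    using aux[OF assms(1), where N=N and K=K and d=d] by (intro mult_le_mono2) linarith
  then show ?thesis by (simp add: algebra_simps)
qed

end
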